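(* For each $2p\in\{216, 270, 324\}$ there exists a cyclic DCA$(4,2p+1;2p)$ satisfying P1 and P2.
   Context: A difference covering array DCA$(k,\eta;n)$ over $\mathbb{Z}_n$ (a cyclic DCA) is an $\eta\times k$ matrix $Q=[q(i,j)]$ with entries in $\mathbb{Z}_n$ such that for every pair of distinct columns $j,j'$ the multiset $\{q(i,j)-q(i,j') : 0\le i\le \eta-1\}$ contains every element of $\mathbb{Z}_n$ at least once. A DCA$(k,n+1;n)$ is taken in normalized form: all entries of its last row (row $n$) and last column (column $k-1$) equal $0$. It satisfies P1 if $0$ occurs at least twice in every column, and P2 if for all distinct columns $j,j'$ with $j\neq k-1\neq j'$, the set $\{q(i,j)-q(i,j') : 0\le i\le n-1\}$ equals $\mathbb{Z}_n\setminus\{0\}$. *)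

theory Defs
  imports Main
begin

text \<open>An eta x k matrix over Z_n is a function Q :: nat => nat => int (row i, column j),
  considered for i < eta, j < k, with entries taken as residues in {0..<n}.\<close>

definition is_DCA :: "nat \<Rightarrow> nat \<Rightarrow> nat \<Rightarrow> (nat \<Rightarrow> nat \<Rightarrow> int) \<Rightarrow> bool" where
  "is_DCA k eta n Q \<longleftrightarrow>
     (\<forall>i<eta. \<forall>j<k. 0 \<le> Q i j \<and> Q i j < int n) \<and>
     (\<forall>j<k. \<forall>j'<k. j \<noteq> j' \<longrightarrow>
        (\<forall>d\<in>{0..<int n}. \<exists>i<eta. (Q i j - Q i j') mod int n = d))"

definition DCA_normalized :: "nat \<Rightarrow> nat \<Rightarrow> (nat \<Rightarrow> nat \<Rightarrow> int) \<Rightarrow> bool" where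
  "DCA_normalized k n Q \<longleftrightarrow>
     (\<forall>j<k. Q n j = 0) \<and> (\<forall>i<n+1. Q i (k - 1) = 0)"

definition DCA_P1 :: "nat \<Rightarrow> nat \<Rightarrow> nat \<Rightarrow> (nat \<Rightarrow> nat \<Rightarrow> int) \<Rightarrow> bool" where
  "DCA_P1 k eta n Q \<longleftrightarrow> (\<forall>j<k. card {i. i < eta \<and> Q i j = 0} \<ge> 2)"

definition DCA_P2 :: "nat \<Rightarrow> nat \<Rightarrow> (nat \<Rightarrow> nat \<Rightarrow> int) \<Rightarrow> bool" where
  "DCA_P2 k n Q \<longleftrightarrow>
     (\<forall>j<k. \<forall>j'<k. j \<noteq> j' \<and> j \<noteq> k - 1 \<and> j' \<noteq> k - 1 \<longrightarrow>
        {(Q i j - Q i j') mod int n | i. i < n} = {1..<int n})"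

end

theory Submission
  imports Defs
begin

fun merge :: "nat list \<Rightarrow> nat list \<Rightarrow> nat list" where
  "merge [] ys = ys"
| "merge xs [] = xs"
| "merge (x#xs) (y#ys) = (if x \<le> y then x # merge xs (y#ys) else y # merge (x#xs) ys)"

lemma set_merge[simp]: "set (merge xs ys) = set xs \<union> set ys"
  by (induction xs ys rule: merge.induct) auto

function msort :: "nat list \<Rightarrow> nat list" where
  "msort xs = (if length xs \<le> 1 then xs else
     merge (msort (take (length xs div 2) xs)) (msort (drop (length xs div 2) xs)))"
  by auto
termination by (relation "measure length") auto

declare msort.simps[simp del]

lemma set_msort: "set (msort xs) = set xs"
proof (induction xs rule: msort.induct)
  case (1 xs)
  show ?case
  proof (cases "length xs \<le> 1")
    case True
    then show ?thesis by (simp add: msort.simps)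
  next
    case False
    then have "set (msort xs) = set (msort (take (length xs div 2) xs)) \<union> set (msort (drop (length xs div 2) xs))"
      by (simp add: msort.simps)
    also have "\<dots> = set (take (length xs div 2) xs) \<union> set (drop (length xs div 2) xs)"
      using 1 False by simp
    also have "\<dots> = set xs" by (metis set_append append_take_drop_id)
    finally show ?thesis .
  qed
qed

function upto_list :: "nat \<Rightarrow> nat \<Rightarrow> nat list" where
  "upto_list k n = (if k < n then k # upto_list (k + 1) n else [])"
  by auto
termination by (relation "measure (\<lambda>(k, n). n - k)") auto

declare upto_list.simps[simp del]

lemma set_upto_list: "set (upto_list k n) = {k..<n}"
proof (induction k n rule: upto_list.induct)
  case (1 k n)
  then show ?case
    by (cases "k < n") (auto simp: upto_list.simps[of k n])
qed

definition Qof :: "nat \<Rightarrow> nat list list \<Rightarrow> nat \<Rightarrow> nat \<Rightarrow> int" where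
  "Qof n cs i j = (if i < n \<and> j < 3 then int (cs ! j ! i) else 0)"

lemma set_map2_nth:
  assumes "length xs = n" "length ys = n"
  shows "set (map2 f xs ys) = {f (xs ! i) (ys ! i) | i. i < n}"
  using assms by (auto simp: set_zip)

lemma int_diff_mod:
  assumes "a < n" "b < n"
  shows "(int a - int b) mod int n = int ((a + n - b) mod n)"
proof -
  have "int ((a + n - b) mod n) = int (a + n - b) mod int n" by (simp add: zmod_int)
  also have "int (a + n - b) = (int a - int b) + int n" using assms by simp
  also have "((int a - int b) + int n) mod int n = (int a - int b) mod int n" by simp
  finally show ?thesis by simp
qed

lemma gen:
  assumes n2: "2 \<le> n"
    and len: "\<And>j. j < 3 \<Longrightarrow> length (cs ! j) = n"
    and col: "\<And>j. j < 3 \<Longrightarrow> set (cs ! j) = {0..<n}"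
    and dif: "\<And>j j'. j < 3 \<Longrightarrow> j' < 3 \<Longrightarrow> j \<noteq> j' \<Longrightarrow>
               set (map2 (\<lambda>a b. (a + n - b) mod n) (cs ! j) (cs ! j')) = {1..<n}"
  shows "is_DCA 4 (n + 1) n (Qof n cs) \<and> DCA_normalized 4 n (Qof n cs) \<and>
         DCA_P1 4 (n + 1) n (Qof n cs) \<and> DCA_P2 4 n (Qof n cs)"
proof -
  let ?Q = "Qof n cs"
  have bnd: "cs ! j ! i < n" if "j < 3" "i < n" for i j
  proof -
    have "cs ! j ! i \<in> set (cs ! j)" using that len[OF that(1)] by simp
    then show ?thesis using col[OF that(1)] by auto
  qed
  have dmod: "(?Q i j - ?Q i j') mod int n = int ((cs ! j ! i + n - cs ! j' ! i) mod n)"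
    if "j < 3" "j' < 3" "i < n" for i j j'
    using that bnd[OF that(1,3)] bnd[OF that(2,3)] by (simp add: Qof_def int_diff_mod)
  have difset: "{(cs ! j ! i + n - cs ! j' ! i) mod n | i. i < n} = {1..<n}"
    if "j < 3" "j' < 3" "j \<noteq> j'" for j j'
    using dif[OF that] set_map2_nth[OF len[OF that(1)] len[OF that(2)], of "\<lambda>a b. (a + n - b) mod n"]
    by simp
  have colidx: "\<exists>i<n. cs ! j ! i = v" if "j < 3" "v < n" for j v
  proof -
    have "v \<in> set (cs ! j)" using col[OF that(1)] that(2) by simp
    then show ?thesis using len[OF that(1)] by (auto simp: in_set_conv_nth)
  qed
  have isdca: "is_DCA 4 (n + 1) n ?Q"
    unfolding is_DCA_def
  proof (intro conjI allI impI ballI)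
    fix i j assume "i < n + 1" "j < (4::nat)"
    then show "0 \<le> ?Q i j" by (simp add: Qof_def)
    show "?Q i j < int n"
    proof (cases "i < n \<and> j < 3")
      case True then show ?thesis using bnd[of j i] by (simp add: Qof_def)
    next
      case False
      then have "?Q i j = 0" unfolding Qof_def by (rule if_not_P)
      then show ?thesis using n2 by simp
    qed
  next
    fix j j' :: nat and d :: int
    assume j: "j < 4" and j': "j' < 4" and ne: "j \<noteq> j'" and d: "d \<in> {0..<int n}"
    show "\<exists>i<n + 1. (?Q i j - ?Q i j') mod int n = d"
    proof (cases "j < 3 \<and> j' < 3")
      case True
      show ?thesis
      proof (cases "d = 0")
        case True
        then show ?thesis by (intro exI[of _ n]) (simp add: Qof_def)
      next
        case False
        then have "nat d \<in> {1..<n}" using d by auto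
        then have "nat d \<in> {(cs ! j ! i + n - cs ! j' ! i) mod n | i. i < n}"
          using difset[of j j'] True ne by simp
        then obtain i where i: "i < n" "(cs ! j ! i + n - cs ! j' ! i) mod n = nat d"
          by (auto simp only: mem_Collect_eq)
        have "(?Q i j - ?Q i j') mod int n = d" using dmod[of j j' i] True d i by simp
        then show ?thesis using i(1) by (intro exI[of _ i]) simp
      qed
    next
      case False
      then have "(j < 3 \<and> j' = 3) \<or> (j = 3 \<and> j' < 3)" using j j' ne by auto
      then show ?thesis
      proof
        assume h: "j < 3 \<and> j' = 3"
        have "nat d < n" using d by auto
        then obtain i where i: "i < n" "cs ! j ! i = nat d" using colidx[of j "nat d"] h by blast
        then show ?thesis using h d by (intro exI[of _ i]) (simp add: Qof_def)
      next
        assume h: "j = 3 \<and> j' < 3"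
        have "(n - nat d) mod n < n" using n2 by simp
        then obtain i where i: "i < n" "cs ! j' ! i = (n - nat d) mod n"
          using colidx[of j' "(n - nat d) mod n"] h by blast
        have "(0 - int ((n - nat d) mod n)) mod int n = d"
        proof (cases "d = 0")
          case True then show ?thesis by simp
        next
          case False
          then have "(n - nat d) mod n = n - nat d" using d by auto
          moreover have "int (n - nat d) = int n - d" using d by auto
          ultimately have e: "(0 - int ((n - nat d) mod n)) = d - int n" by simp
          have "(d - int n) mod int n = ((d - int n) + int n) mod int n"
            by (rule mod_add_self2[symmetric])
          then have m: "(d - int n) mod int n = d" using d by simp
          show ?thesis using e m by simp
        qed
        then show ?thesis using h i by (intro exI[of _ i]) (simp add: Qof_def)
      qed
    qed
  qed
  have norm: "DCA_normalized 4 n ?Q" by (simp add: DCA_normalized_def Qof_def)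
  have p1: "DCA_P1 4 (n + 1) n ?Q"
    unfolding DCA_P1_def
  proof (intro allI impI)
    fix j :: nat assume j: "j < 4"
    show "2 \<le> card {i. i < n + 1 \<and> ?Q i j = 0}"
    proof (cases "j < 3")
      case True
      obtain i0 where i0: "i0 < n" "cs ! j ! i0 = 0" using colidx[OF True, of 0] n2 by auto
      have sub: "{i0, n} \<subseteq> {i. i < n + 1 \<and> ?Q i j = 0}" using i0 True by (auto simp: Qof_def)
      have "card {i0, n} \<le> card {i. i < n + 1 \<and> ?Q i j = 0}"
        by (rule card_mono[OF _ sub]) auto
      moreover have "card {i0, n} = 2" using i0 by simp
      ultimately show ?thesis by simp
    next
      case False
      then have "{i. i < n + 1 \<and> ?Q i j = 0} = {..<n+1}" by (auto simp: Qof_def)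
      then show ?thesis using n2 by simp
    qed
  qed
  have p2: "DCA_P2 4 n ?Q"
    unfolding DCA_P2_def
  proof (intro allI impI)
    fix j j' :: nat assume h: "j < 4" "j' < 4" "j \<noteq> j' \<and> j \<noteq> 4 - 1 \<and> j' \<noteq> 4 - 1"
    then have hj: "j < 3" "j' < 3" "j \<noteq> j'" by auto
    let ?g = "\<lambda>i. (cs ! j ! i + n - cs ! j' ! i) mod n"
    have e1: "{(?Q i j - ?Q i j') mod int n | i. i < n} = (\<lambda>i. (?Q i j - ?Q i j') mod int n) ` {..<n}"
      by blast
    have e2: "(\<lambda>i. (?Q i j - ?Q i j') mod int n) ` {..<n} = (\<lambda>i. int (?g i)) ` {..<n}"
      by (rule image_cong) (simp_all add: dmod[OF hj(1,2)])
    have e3: "(\<lambda>i. int (?g i)) ` {..<n} = int ` (?g ` {..<n})" by (simp add: image_image)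
    have e4: "?g ` {..<n} = {?g i | i. i < n}" by blast
    have "{(?Q i j - ?Q i j') mod int n | i. i < n} = int ` {(cs ! j ! i + n - cs ! j' ! i) mod n | i. i < n}"
      using e1 e2 e3 e4 by simp
    also have "\<dots> = int ` {1..<n}" using difset[OF hj] by simp
    also have "\<dots> = {1..<int n}" by (simp add: image_int_atLeastLessThan)
    finally show "{(?Q i j - ?Q i j') mod int n | i. i < n} = {1..<int n}" .
  qed
  show ?thesis using isdca norm p1 p2 by simp
qed

lemma lt3_cases: "j < (3::nat) \<Longrightarrow> j = 0 \<or> j = 1 \<or> j = 2" by auto

lemma set_from_msort:
  assumes "msort xs = ys" shows "set xs = set ys"
  using set_msort[of xs] assms by simp

lemma inst:
  fixes A B C :: "nat list" and n h :: nat
  defines "f \<equiv> (\<lambda>a b. (a + n - b) mod n)"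
  assumes n2: "2 \<le> n" and h: "1 \<le> h" "h < n"
    and lA: "length A = n" and lB: "length B = n" and lC: "length C = n"
    and sA: "msort A = upto_list 0 n" and sB: "msort B = upto_list 0 n" and sC: "msort C = upto_list 0 n"
    and dAB: "msort (map2 f A B) = upto_list 1 (h + 1) @ upto_list h n"
    and dBA: "msort (map2 f B A) = upto_list 1 (h + 1) @ upto_list h n"
    and dAC: "msort (map2 f A C) = upto_list 1 (h + 1) @ upto_list h n"
    and dCA: "msort (map2 f C A) = upto_list 1 (h + 1) @ upto_list h n"
    and dBC: "msort (map2 f B C) = upto_list 1 (h + 1) @ upto_list h n"
    and dCB: "msort (map2 f C B) = upto_list 1 (h + 1) @ upto_list h n"
  shows "\<exists>Q. is_DCA 4 (n + 1) n Q \<and> DCA_normalized 4 n Q \<and>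
           DCA_P1 4 (n + 1) n Q \<and> DCA_P2 4 n Q"
proof -
  let ?cs = "[A, B, C]"
  have U: "set (upto_list 1 (h + 1) @ upto_list h n) = {1..<n}"
    using h by (auto simp: set_upto_list)
  have U0: "set (upto_list 0 n) = {0..<n}" by (simp add: set_upto_list)
  have len: "length (?cs ! j) = n" if "j < 3" for j
    using lt3_cases[OF that] lA lB lC by auto
  have col: "set (?cs ! j) = {0..<n}" if "j < 3" for j
    using lt3_cases[OF that] set_from_msort[OF sA] set_from_msort[OF sB] set_from_msort[OF sC] U0
    by auto
  have dif: "set (map2 (\<lambda>a b. (a + n - b) mod n) (?cs ! j) (?cs ! j')) = {1..<n}"
    if "j < 3" "j' < 3" "j \<noteq> j'" for j j'
  proof -
    have k: "set (map2 f xs ys) = {1..<n}"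
      if "msort (map2 f xs ys) = upto_list 1 (h + 1) @ upto_list h n" for xs ys
      using set_from_msort[OF that] U by simp
    have "set (map2 f (?cs ! j) (?cs ! j')) = {1..<n}"
      using lt3_cases[OF that(1)] lt3_cases[OF that(2)] that(3)
    proof (elim disjE)
    qed (simp_all only: nth_Cons_0 One_nat_def numeral_2_eq_2 nth_Cons_Suc k dAB dBA dAC dCA dBC dCB
                        simp_thms)
    then show ?thesis by (simp add: f_def)
  qed
  show ?thesis using gen[OF n2 len col dif] by blast
qed

definition A216 :: "nat list" where
  "A216 = [14, 25, 84, 66, 179, 72, 108, 165, 119, 189, 124, 139, 175, 88, 48, 56, 46, 98, 215, 27, 203, 205, 42, 123, 1, 40, 106, 169, 103, 24, 161, 198, 212, 91, 177, 4, 158, 135, 112, 213, 12, 52, 61, 26, 167, 2, 63, 133, 82, 80, 5, 173, 210, 54, 140, 166, 163, 41, 101, 109, 207, 19, 17, 31, 200, 192, 164, 87, 10, 114, 125, 83, 168, 170, 149, 143, 29, 85, 155, 90, 37, 62, 208, 176, 43, 115, 187, 211, 89, 67, 64, 15, 105, 0, 71, 128, 107, 201, 22, 96, 79, 49, 47, 178, 11, 93, 94, 59, 111, 69, 134, 76, 60, 196, 209, 23, 121, 129, 68, 184, 32, 28, 18, 75, 160, 45, 122, 199, 146, 195, 126, 142, 157, 44, 104, 38, 206, 197, 77, 182, 92, 144, 57, 50, 141, 180, 73, 214, 127, 153, 95, 9, 132, 8, 120, 33, 152, 186, 116, 136, 162, 159, 20, 39, 3, 117, 148, 102, 97, 118,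 151, 78, 137, 130, 86, 194, 147, 35, 150, 185, 145, 99, 188, 70, 204, 183, 156, 16, 181, 190, 65, 154, 131, 138, 51, 113, 21, 58, 171, 100, 202, 36, 34, 191, 193, 110, 74, 53, 174, 81, 13, 55, 172, 7, 6, 30]"

definition B216 :: "nat list" where
  "B216 = [20, 142, 68, 200, 81, 87, 14, 9, 159, 187, 88, 148, 116, 92, 168, 186, 128, 64, 143, 151, 194, 91, 181, 34, 109, 127, 6, 182, 177, 102, 99, 179, 63, 212, 75, 133, 189, 155, 175, 202, 60, 105, 197, 122, 210, 169, 39, 16, 173, 153, 184, 49, 51, 76, 101, 56, 35, 134, 209, 19, 166, 161, 71, 24, 117, 0, 96, 126, 54, 165, 67, 158, 84, 1, 58, 195, 98, 53, 29, 2, 103, 123, 215, 31, 33, 93, 140, 199, 157, 132, 113, 44, 206, 149, 94, 97, 144, 150, 5, 141, 120, 48, 3, 204, 214, 152, 119, 38, 130, 145, 139, 50, 27, 74, 104, 95, 42, 111, 70, 156, 26, 196, 115, 178, 25, 78, 192, 138, 86, 79, 22, 89, 30, 205, 121, 124, 11, 36, 112, 193, 65, 129, 107, 135, 118, 41, 171, 176, 137, 72, 43, 10, 146, 167, 162, 61, 198, 32, 66, 4, 55, 62, 207, 69, 154, 125, 82, 114, 21, 40, 80, 15, 164, 85, 191, 73, 185, 211, 17, 180, 52, 203, 28, 106, 190, 77, 131, 13, 23, 170, 83, 45, 46, 172, 47, 59, 136, 12, 174, 57, 18, 100, 208, 183, 163, 7, 90, 213, 37, 8, 160, 201, 108, 188,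 147, 110]"

definition C216 :: "nat list" where
  "C216 = [132, 33, 172, 37, 93, 110, 173, 133, 174, 165, 43, 1, 63, 200, 47, 48, 163, 122, 138, 74, 80, 0, 151, 66, 117, 211, 58, 106, 59, 88, 20, 97, 23, 194, 72, 49, 32, 26, 148, 129, 86, 186, 101, 83, 144, 16, 53, 191, 6, 147, 152, 34, 192, 155, 142, 150, 154, 84, 197, 107, 176, 198, 45, 52, 68, 90, 193, 156, 35, 25, 105, 102, 184, 104, 69, 109, 175, 118, 167, 18, 178, 124, 2, 91, 134, 41, 119, 128, 76, 5, 70, 46, 75, 81, 121, 77, 100, 114, 39, 137, 171, 177, 208, 56, 166, 188, 199, 130, 92, 44, 164, 158, 123, 65, 159, 145, 11, 21, 141, 7, 112, 180, 22, 161, 108, 98, 201, 185, 143, 153, 127, 9, 140, 170, 113, 196, 42, 169, 136, 135, 126, 162, 206, 10, 85, 40, 99, 30, 181, 94, 195, 189, 202, 57, 12, 27, 103, 160, 73, 115, 204, 3, 55, 62, 54, 71, 95, 29, 19, 205, 207, 203, 209, 38, 89, 182, 51, 24, 36, 82, 213, 60, 183, 168, 87, 15, 61, 31, 116, 157, 131, 215, 4, 78, 64, 210, 67, 17, 149, 96, 8, 146, 212, 120, 139, 13, 111, 190, 179, 125, 214, 28, 79, 14, 187, 50]"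

lemma ex216: "\<exists>Q. is_DCA 4 (216 + 1) 216 Q \<and> DCA_normalized 4 216 Q \<and>
           DCA_P1 4 (216 + 1) 216 Q \<and> DCA_P2 4 216 Q"
  by (rule inst[where h=108 and A=A216 and B=B216 and C=C216])
     (simp_all add: A216_def B216_def C216_def msort.simps upto_list.simps)

definition A270 :: "nat list" where
  "A270 = [182, 236, 155, 74, 128, 121, 202, 148, 229, 40, 81, 189, 162, 135, 108, 188, 107, 161, 215, 134, 133, 79, 160, 241, 52, 219, 165, 111, 57, 3, 10, 226, 172, 118, 64, 125, 98, 71, 44, 17, 16, 124, 97, 205, 43, 258, 177, 231, 15, 69, 42, 96, 150, 204, 123, 45, 72, 99, 126, 153, 122, 203, 14, 230, 176, 34, 88, 142, 196, 115, 179, 206, 233, 260, 152, 49, 211, 238, 265, 22, 27, 216, 0, 54, 243, 26, 53, 80, 242, 269, 256, 67, 13, 94, 175, 85, 31, 247, 193, 4, 137, 110, 218, 191, 164, 116, 197, 8, 224, 170, 21, 264, 102, 210, 48, 129, 75, 156, 237, 183, 117, 9, 171, 198, 90, 143, 89, 35, 251, 62, 61, 223, 250, 7, 169, 92, 38, 119, 200, 146, 29, 56, 83, 245, 2, 12, 39, 201, 93, 120, 58, 112, 166, 220, 139, 268, 187, 106, 25, 214, 259, 178, 232, 151, 70, 47, 263, 209, 20, 101, 113, 5, 32, 194, 86, 228, 174, 255, 66, 147, 195, 249, 33, 222, 141, 104, 158, 77, 131, 50, 262, 154, 181, 208, 235, 239, 266, 23, 185, 212, 105, 78, 186, 159, 267,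 37, 91, 145, 199, 253, 173, 254, 65, 11, 227, 257, 95, 68, 41, 149, 130, 184, 103, 157, 76, 248, 221, 59, 167, 140, 84, 246, 138, 30, 192, 207, 261, 180, 234, 18, 19, 127, 100, 73, 46, 136, 244, 82, 190, 28, 1, 163, 55, 217, 109, 6, 87, 168, 114, 60, 240, 51, 132, 213, 24, 225, 144, 63, 252, 36]"

definition B270 :: "nat list" where
  "B270 = [261, 207, 18, 234, 45, 155, 74, 263, 47, 236, 64, 10, 226, 37, 118, 242, 188, 134, 80, 26, 162, 0, 108, 81, 189, 60, 87, 249, 141, 168, 7, 196, 115, 34, 223, 211, 157, 238, 49, 265, 117, 9, 36, 63, 225, 128, 20, 182, 209, 101, 72, 99, 126, 153, 180, 174, 255, 66, 12, 228, 58, 112, 31, 85, 4, 29, 2, 110, 218, 191, 138, 192, 246, 165, 84, 68, 14, 95, 41, 257, 149, 122, 230, 203, 176, 30, 3, 111, 219, 57, 38, 65, 227, 119, 11, 179, 71, 98, 260, 152, 145, 199, 253, 172, 91, 154, 46, 208, 100, 262, 103, 130, 22, 184, 76, 82, 244, 136, 28, 190, 200, 173, 146, 254, 92, 240, 267, 159, 51, 78, 127, 181, 235, 19, 73, 125, 233, 206, 44, 17, 89, 35, 251, 197, 8, 129, 48, 237, 21, 210, 215, 161, 107, 53, 269, 224, 116, 143, 170, 62, 94, 202, 40, 13, 121, 16, 178, 205, 232, 124, 239, 23, 212, 266, 50, 32, 140, 248, 86, 194, 25, 241, 187, 133, 79, 27, 54, 216, 243, 135, 217, 55, 163, 1, 109,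 229, 148, 67, 256, 175, 96, 15, 69, 258, 42, 132, 105, 213, 186, 24, 167, 5, 113, 221, 59, 268, 160, 52, 214, 106, 131, 77, 158, 104, 185, 139, 193, 247, 166, 220, 137, 83, 164, 245, 56, 88, 250, 142, 169, 61, 177, 204, 231, 123, 150, 90, 144, 198, 252, 171, 259, 97, 70, 43, 151, 33, 6, 114, 222, 195, 39, 201, 93, 120, 147, 156, 264, 102, 75, 183]"

definition C270 :: "nat list" where
  "C270 = [123, 15, 177, 69, 96, 90, 198, 36, 9, 117, 135, 162, 54, 81, 243, 251, 8, 35, 197, 224, 200, 92, 254, 11, 38, 189, 108, 27, 216, 0, 240, 132, 24, 51, 213, 230, 149, 203, 122, 41, 76, 265, 49, 238, 22, 182, 155, 263, 236, 74, 146, 227, 173, 119, 65, 219, 138, 192, 246, 30, 94, 67, 175, 148, 256, 225, 171, 252, 63, 144, 199, 172, 10, 253, 91, 55, 28, 136, 109, 217, 165, 111, 57, 3, 84, 231, 42, 258, 204, 150, 260, 179, 98, 17, 71, 228, 147, 201, 120, 174, 102, 183, 264, 75, 156, 125, 44, 233, 152, 206, 113, 59, 5, 221, 32, 190, 163, 1, 244, 82, 142, 223, 169, 250, 61, 12, 66, 255, 39, 93, 88, 34, 115, 196, 7, 83, 137, 56, 110, 29, 211, 130, 184, 103, 157, 158, 239, 50, 131, 77, 101, 128, 20, 47, 209, 194, 140, 86, 167, 248, 129, 21, 48, 210, 237, 46, 19, 262, 235, 208, 127, 100, 73, 181, 154, 166, 85, 4, 193, 247, 212, 104, 266, 23, 185,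 33, 249, 195, 6, 222, 2, 191, 245, 164, 218, 45, 126, 207, 18, 99, 72, 153, 234, 180, 261, 79, 106, 133, 160, 52, 78, 105, 267, 159, 186, 205, 151, 232, 43, 124, 70, 97, 259, 16, 178, 62, 143, 89, 170, 116, 112, 31, 220, 139, 58, 87, 168, 114, 60, 141, 64, 145, 226, 37, 118, 121, 202, 13, 229, 40, 161, 242, 188, 134, 215, 14, 68, 257, 176, 95, 187, 241, 25, 214, 268, 107, 53, 269, 80, 26]"

lemma ex270: "\<exists>Q. is_DCA 4 (270 + 1) 270 Q \<and> DCA_normalized 4 270 Q \<and>
           DCA_P1 4 (270 + 1) 270 Q \<and> DCA_P2 4 270 Q"
  by (rule inst[where h=135 and A=A270 and B=B270 and C=C270])
     (simp_all add: A270_def B270_def C270_def msort.simps upto_list.simps)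

definition A324 :: "nat list" where
  "A324 = [74, 37, 69, 244, 86, 284, 97, 71, 136, 166, 290, 5, 112, 303, 205, 152, 257, 191, 47, 78, 214, 46, 77, 13, 274, 73, 36, 281, 156, 56, 142, 3, 311, 307, 221, 288, 306, 203, 219, 145, 199, 110, 44, 201, 114, 317, 81, 292, 19, 193, 52, 218, 1, 22, 319, 49, 90, 102, 100, 234, 215, 39, 106, 305, 40, 158, 41, 55, 126, 181, 252, 80, 138, 168, 164, 316, 72, 239, 125, 64, 251, 283, 266, 300, 312, 314, 187, 176, 273, 180, 89, 231, 172, 296, 67, 297, 104, 196, 94, 14, 92, 224, 24, 282, 122, 153, 286, 167, 241, 294, 163, 45, 260, 254, 309, 20, 11, 320, 134, 313, 107, 197, 51, 54, 101, 61, 287, 140, 261, 131, 62, 206, 29, 15, 223, 109, 233, 130, 211, 225, 127, 148, 216, 132, 280, 298, 285, 144, 147, 230, 321, 105, 262, 117, 259, 25, 289, 133, 139, 322, 121, 310, 26, 16, 295, 6, 118, 65, 43, 87, 302, 245, 304, 204, 178, 17, 60, 222, 50, 146, 183, 277, 194, 169, 124, 299, 271, 10, 226, 175, 58, 9, 79, 66, 177, 171, 318, 268, 202, 32, 186, 213, 137, 275, 96, 157, 99, 184, 2, 212, 228, 154, 111, 209, 91, 160, 250, 85, 75, 123, 42, 143, 173, 150, 116, 236, 30, 170, 301, 217, 256, 84, 210, 151, 229, 247, 258, 249, 103, 246, 18, 263, 192, 207, 220, 129, 4, 195, 162, 200, 119, 315, 7, 68, 115, 0, 70, 83, 190, 179,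 95, 21, 272, 23, 238, 265, 149, 255, 108, 34, 48, 38, 27, 59, 269, 227, 28, 279, 293, 185, 120, 270, 159, 291, 237, 182, 235, 253, 57, 33, 35, 308, 155, 135, 174, 161, 267, 63, 248, 243, 189, 240, 12, 198, 188, 276, 93, 165, 208, 88, 323, 82, 113, 31, 232, 242, 278, 141, 128, 76, 98, 264, 53, 8]"

definition B324 :: "nat list" where
  "B324 = [65, 276, 49, 146, 323, 182, 225, 201, 84, 258, 273, 187, 313, 42, 256, 8, 164, 36, 93, 223, 132, 163, 171, 306, 19, 177, 6, 135, 21, 122, 251, 50, 278, 168, 62, 310, 181, 293, 57, 156, 96, 104, 126, 130, 287, 41, 314, 53, 174, 265, 78, 210, 193, 35, 185, 157, 64, 59, 231, 288, 216, 180, 71, 58, 67, 129, 127, 169, 89, 107, 245, 68, 264, 188, 274, 249, 117, 268, 124, 113, 125, 234, 296, 315, 11, 237, 10, 15, 161, 250, 108, 240, 106, 24, 123, 112, 295, 99, 138, 239, 253, 74, 26, 279, 203, 178, 197, 29, 63, 198, 109, 238, 202, 97, 139, 300, 228, 206, 172, 88, 255, 25, 280, 154, 277, 285, 144, 61, 143, 152, 281, 184, 298, 159, 52, 275, 219, 194, 214, 189, 82, 260, 128, 200, 120, 98, 207, 75, 136, 149, 39, 101, 115, 319, 77, 292, 322, 95, 212, 211, 179, 43, 91, 100, 66, 119, 286, 0, 131, 192, 263, 229, 294, 176, 252, 150, 72, 92, 173, 76, 262, 221, 133, 244, 90, 158, 54, 18, 208, 290, 195, 271, 190, 270, 4, 5,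 137, 155, 226, 272, 220, 254, 153, 151, 28, 38, 218, 47, 134, 48, 304, 191, 147, 44, 299, 243, 105, 70, 309, 102, 40, 183, 20, 307, 241, 13, 165, 60, 83, 111, 233, 186, 162, 213, 170, 282, 301, 308, 232, 204, 317, 222, 141, 33, 291, 56, 224, 86, 311, 217, 316, 46, 85, 22, 55, 209, 80, 3, 2, 166, 1, 205, 267, 145, 32, 116, 199, 215, 242, 121, 289, 312, 45, 247, 12, 318, 148, 51, 266, 31, 236, 142, 297, 259, 34, 196, 73, 284, 118, 9, 175, 87, 79, 140, 110, 167, 23, 16, 17, 303, 103, 14, 235, 69, 227, 283, 30, 321, 261, 320, 27, 114, 94, 302, 160, 246, 81, 230, 7, 248, 305, 37, 269, 257]"

definition C324 :: "nat list" where
  "C324 = [189, 246, 230, 269, 10, 67, 213, 287, 258, 234, 93, 320, 156, 78, 39, 105, 266, 137, 16, 286, 192, 23, 3, 148, 130, 196, 251, 127, 238, 116, 73, 15, 279, 177, 33, 138, 49, 222, 208, 218, 209, 45, 52, 19, 1, 191, 307, 226, 131, 219, 37, 146, 223, 319, 56, 35, 87, 277, 296, 240, 244, 90, 206, 11, 306, 299, 22, 211, 44, 157, 257, 76, 46, 32, 294, 228, 315, 271, 250, 204, 253, 200, 97, 70, 202, 150, 225, 242, 101, 245, 129, 310, 316, 57, 272, 249, 103, 304, 153, 285, 167, 119, 169, 36, 270, 292, 314, 301, 221, 281, 280, 291, 121, 48, 81, 302, 100, 321, 284, 51, 40, 147, 162, 89, 31, 115, 126, 181, 30, 168, 6, 8,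 143, 58, 66, 255, 275, 84, 94, 145, 229, 187, 172, 125, 4, 62, 188, 220, 165, 175, 24, 9, 140, 79, 99, 288, 305, 237, 109, 155, 80, 183, 95, 312, 171, 17, 14, 231, 74, 197, 69, 290, 63, 217, 201, 235, 180, 26, 289, 166, 173, 260, 295, 92, 64, 164, 27, 182, 283, 154, 142, 86, 151, 198, 98, 195, 123, 139, 29, 135, 124, 106, 190, 82, 282, 25, 47, 120, 72, 268, 28, 91, 265, 108, 7, 215, 159, 83, 254, 261, 273, 214, 161, 38, 259, 149, 264, 59, 41, 128, 170, 193, 54, 248, 262, 113, 53, 178, 256, 55, 267, 2, 298, 104, 318, 216, 21, 96, 243, 163, 232, 276, 263, 118, 297, 199, 77, 132, 185, 300, 60, 194, 236, 233, 212, 317, 239, 313, 111, 0, 42, 303, 210, 224, 107, 176, 205, 133, 61, 322, 323, 252, 134, 114, 241, 174, 309, 34, 152, 308, 50, 20, 18, 102, 12, 247, 112, 85, 117, 227, 71, 65, 293, 141, 88, 136, 274, 186, 75, 43, 158, 311, 160, 207, 203, 122, 184, 68, 5, 110, 144, 278, 13, 179]"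

lemma ex324: "\<exists>Q. is_DCA 4 (324 + 1) 324 Q \<and> DCA_normalized 4 324 Q \<and>
           DCA_P1 4 (324 + 1) 324 Q \<and> DCA_P2 4 324 Q"
  by (rule inst[where h=162 and A=A324 and B=B324 and C=C324])
     (simp_all add: A324_def B324_def C324_def msort.simps upto_list.simps)

theorem mainTheorem13:
  shows "\<forall>n\<in>{216, 270, 324::nat}. \<exists>Q.
           is_DCA 4 (n + 1) n Q \<and> DCA_normalized 4 n Q \<and>
           DCA_P1 4 (n + 1) n Q \<and> DCA_P2 4 n Q"
  using ex216 ex270 ex324 by blast
end
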